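(* For all $e,f\in\mathrm{Exp}$, if $e\equiv f$ then $e\sim f$.
   Context: Fix a finite set $T$ of primitive tests, a set $\mathrm{Act}$ of atomic actions, a set $\mathrm{Out}$ of return values, and a semiring $(S,+,\cdot,0,1)$ that is positive ($x+y=0\Rightarrow x=y=0$), refinement (whenever $x+y=z+w$ there exist $s,t,u,v$ with $s+t=x$, $s+u=z$, $u+v=y$, $t+v=w$) and Conway (with ${}^*:S\to S$ satisfying $(a+b)^*=a^*(ba^* )^*$, $(ab)^*=1+a(ba)^*b$). Tests: $b,c\in\mathrm{BExp}::=\mathtt{0}\mid\mathtt{1}\mid t\ (t\in T)\mid\bar b\mid b+c\mid bc$ ($\mathtt 0,\mathtt 1$ false/true, distinct from semiring $0,1$); $\equiv_{BA}$ is Boolean equivalence; $\mathrm{At}$ is the finite set of atoms of the free Boolean algebra on $T$, atoms also regarded as tests; $\alpha\le b$ means $\alpha$ entails $b$. Expressions: $e,f\in\mathrm{Exp}::= p\in\mathrm{Act}\mid b\in\mathrm{BExp}\mid e+_b f\mid e;f\mid e^{(b)}\mid v\in\mathrm{Out}\mid e\oplus_{r,s} f\ (r,s\in S)$; $\odot r:=\mathtt 1\oplus_{r,0}\mathtt 0$. $\mathcal M_\omega(X)$: finitely supported maps $X\to S$, pointwise operations; $\delta_x$ indicator of $x$; $\nu[A]=\sum_{x\in A}\nu(x)$. A wGKAT automaton is $(X,\beta)$ with $\beta:X\to\mathcal M_\omega(\{\mathsf{acc},\mathsf{rej}\}+\mathrm{Out}+\mathrm{Act}\times X)^{\mathrm{At}}$.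 A map $h:X\to Y$ between automata $(X,\beta),(Y,\gamma)$ is a homomorphism if for all $x,\alpha$: $\gamma(h(x))_\alpha(o)=\beta(x)_\alpha(o)$ for $o\in\{\mathsf{acc},\mathsf{rej}\}+\mathrm{Out}$, and $\gamma(h(x))_\alpha(p,y)=\beta(x)_\alpha[\{p\}\times h^{-1}(y)]$. A relation $R\subseteq X\times Y$ is a bisimulation if there is $\rho:R\to\mathcal M_\omega(\{\mathsf{acc},\mathsf{rej}\}+\mathrm{Out}+\mathrm{Act}\times R)^{\mathrm{At}}$ making both projections homomorphisms from $(R,\rho)$; $e\sim f$ means some bisimulation on the derivative automaton $(\mathrm{Exp},\partial)$ contains $(e,f)$. The derivative automaton: $\partial(b)_\alpha=\delta_{\mathsf{acc}}$ if $\alpha\le b$, else $\delta_{\mathsf{rej}}$; $\partial(v)_\alpha=\delta_v$; $\partial(p)_\alpha=\delta_{(p,\mathtt 1)}$; $\partial(e+_bf)_\alpha=\partial(e)_\alpha$ if $\alpha\le b$, else $\partial(f)_\alpha$; $\partial(e\oplus_{r,s}f)_\alpha=r\partial(e)_\alpha+s\partial(f)_\alpha$; $\partial(e;f)_\alpha=\sum_x\partial(e)_\alpha(x)c_{\alpha,f}(x)$ with $c_{\alpha,f}(\mathsf{acc})=\partial(f)_\alpha$, $c_{\alpha,f}(x)=\delta_x$ for $x\in\{\mathsf{rej}\}\cup\mathrm{Out}$, $c_{\alpha,f}(p,e')=\delta_{(p,e';f)}$; $\partial(e^{(b)})_\alpha(x)$ is $1$ if $x=\mathsf{acc}$ and $\alpha\le\bar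 b$; $\partial(e)_\alpha(\mathsf{acc})^*\partial(e)_\alpha(x)$ if $x\in\{\mathsf{rej}\}\cup\mathrm{Out}$ and $\alpha\le b$; $\partial(e)_\alpha(\mathsf{acc})^*\partial(e)_\alpha(p,e')$ if $x=(p,e';e^{(b)})$ and $\alpha\le b$; $0$ otherwise. $E:\mathrm{Exp}\to S^{\mathrm{At}}$: $E(p)_\alpha=E(v)_\alpha=0$; $E(b)_\alpha=1$ if $\alpha\le b$ else $0$; $E(e\oplus_{r,s}f)_\alpha=rE(e)_\alpha+sE(f)_\alpha$; $E(e+_bf)_\alpha=E(e)_\alpha$ if $\alpha\le b$ else $E(f)_\alpha$; $E(e;f)_\alpha=E(e)_\alpha E(f)_\alpha$; $E(e^{(b)})_\alpha=E(\bar b)_\alpha$. The relation $\equiv$ is the smallest congruence on $\mathrm{Exp}$ (tests taken up to $\equiv_{BA}$; sequencing binds tighter than $\oplus$, $\odot$ binds tightest) containing, for all $e,f,g\in\mathrm{Exp}$, tests $b,c$, $v\in\mathrm{Out}$, $r,s,t,u\in S$: (G1) $e+_be\equiv e$; (G2) $e+_bf\equiv b;e+_bf$; (G3) $e+_bf\equiv f+_{\bar b}e$; (G4) $(e+_bf)+_cg\equiv e+_{bc}(f+_cg)$; (D1) $e\oplus_{r,s}(f+_bg)\equiv(e\oplus_{r,s}f)+_b(e\oplus_{r,s}g)$; (D2) $e\oplus_{r,s}(f\oplus_{t,u}g)\equiv e\oplus_{r,1}(f\oplus_{st,su}g)$; (D3) $b;(e\oplus_{r,s}f)\equiv b;(b;e\oplus_{r,s}b;f)$;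 (S1) $\mathtt 1;e\equiv e\equiv e;\mathtt 1$; (S2) $(e;f);g\equiv e;(f;g)$; (S3) $\mathtt 0;e\equiv\mathtt 0$; (S4) $(e\oplus_{r,s}f);g\equiv e;g\oplus_{r,s}f;g$; (S5) $(e+_bf);g\equiv e;g+_bf;g$; (S6) $v;e\equiv v$; (S7) $b;c\equiv bc$; (L1) $e^{(b)}\equiv e;e^{(b)}+_b\mathtt 1$; (C1) $\odot1\equiv\mathtt 1$; (C2) $\odot0;e\equiv\odot0$; (W1) $e\oplus_{r,s}e\equiv\odot(r+s);e$; (W2) $e\oplus_{r,s}f\equiv f\oplus_{s,r}e$; (W3) $e\oplus_{r,s}(f\oplus_{t,u}g)\equiv(e\oplus_{r,st}f)\oplus_{1,su}g$; (W4) $e\oplus_{ru,s}f\equiv(\odot u;e)\oplus_{r,s}f$; and closed under the rules (L2) if $e\equiv(f\oplus_{r,s}\mathtt 1)+_cg$ then $c;e^{(b)}\equiv c;((\odot(s^*r);f;e^{(b)})+_b\mathtt 1)$; (F1) if $g\equiv e;g+_bf$ and $E(e)_\alpha=0$ for all $\alpha\in\mathrm{At}$ then $g\equiv e^{(b)};f$. *)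

theory Defs
  imports Main
begin

class wgkat_semiring = semiring_0 + monoid_mult +
  fixes cstar :: "'a \<Rightarrow> 'a"
  assumes positive: "x + y = 0 \<Longrightarrow> x = 0 \<and> y = 0"
  and refinement: "x + y = z + w \<Longrightarrow>
       \<exists>s t u v. s + t = x \<and> s + u = z \<and> u + v = y \<and> t + v = w"
  and conway_sum: "cstar (a + b) = cstar a * cstar (b * cstar a)"
  and conway_prod: "cstar (a * b) = 1 + a * cstar (b * a) * b"

datatype 't bexp = BZero | BOne | BPrim 't | BNot "'t bexp"
  | BOr "'t bexp" "'t bexp" | BAnd "'t bexp" "'t bexp"

text \<open>Atoms of the free Boolean algebra on the finite set of primitive tests
 (type 't :: finite) are represented by the set of primitive tests they make true.
 beval b A means that atom A entails b.\<close>

primrec beval :: "'t bexp \<Rightarrow> 't set \<Rightarrow> bool" where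
  "beval BZero A = False"
| "beval BOne A = True"
| "beval (BPrim t) A = (t \<in> A)"
| "beval (BNot b) A = (\<not> beval b A)"
| "beval (BOr b c) A = (beval b A \<or> beval c A)"
| "beval (BAnd b c) A = (beval b A \<and> beval c A)"

definition ba_equiv :: "'t::finite bexp \<Rightarrow> 't bexp \<Rightarrow> bool" where
  "ba_equiv b c = (\<forall>A. beval b A = beval c A)"

datatype ('t, 'p, 'v, 's) exp =
    EAct 'p
  | ETest "'t bexp"
  | EGuard "('t, 'p, 'v, 's) exp" "'t bexp" "('t, 'p, 'v, 's) exp"
  | ESeq "('t, 'p, 'v, 's) exp" "('t, 'p, 'v, 's) exp"
  | ELoop "('t, 'p, 'v, 's) exp" "'t bexp"
  | EOut 'v
  | EWeight "('t, 'p, 'v, 's) exp" 's 's "('t, 'p, 'v, 's) exp"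

definition wdot :: "'s::{zero} \<Rightarrow> ('t, 'p, 'v, 's) exp" where
  "wdot r = EWeight (ETest BOne) r 0 (ETest BZero)"

datatype ('v, 'p, 'x) outc = OAcc | ORej | OOut 'v | OAct 'p 'x

fun is_act :: "('v, 'p, 'x) outc \<Rightarrow> bool" where
  "is_act (OAct p x) = True"
| "is_act _ = False"

definition supp :: "('a \<Rightarrow> 's::zero) \<Rightarrow> 'a set" where
  "supp \<nu> = {x. \<nu> x \<noteq> 0}"

definition delta :: "'a \<Rightarrow> 'a \<Rightarrow> 's::{zero,one}" where
  "delta x = (\<lambda>y. if y = x then 1 else 0)"

definition mass :: "('a \<Rightarrow> 's::comm_monoid_add) \<Rightarrow> 'a set \<Rightarrow> 's" where
  "mass \<nu> A = sum \<nu> (A \<inter> supp \<nu>)"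

definition cont :: "(('v, 'p, ('t, 'p, 'v, 's) exp) outc \<Rightarrow> 's::{zero,one})
    \<Rightarrow> ('t, 'p, 'v, 's) exp \<Rightarrow> ('v, 'p, ('t, 'p, 'v, 's) exp) outc
    \<Rightarrow> ('v, 'p, ('t, 'p, 'v, 's) exp) outc \<Rightarrow> 's" where
  "cont df f x = (case x of
      OAcc \<Rightarrow> df
    | ORej \<Rightarrow> delta ORej
    | OOut v \<Rightarrow> delta (OOut v)
    | OAct p e' \<Rightarrow> delta (OAct p (ESeq e' f)))"

primrec deriv :: "('t, 'p, 'v, 's::wgkat_semiring) exp \<Rightarrow> 't set
    \<Rightarrow> ('v, 'p, ('t, 'p, 'v, 's) exp) outc \<Rightarrow> 's" where
  "deriv (ETest b) A = (if beval b A then delta OAcc else delta ORej)"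
| "deriv (EOut v) A = delta (OOut v)"
| "deriv (EAct p) A = delta (OAct p (ETest BOne))"
| "deriv (EGuard e b f) A = (if beval b A then deriv e A else deriv f A)"
| "deriv (EWeight e r s f) A = (\<lambda>x. r * deriv e A x + s * deriv f A x)"
| "deriv (ESeq e f) A =
     (\<lambda>y. \<Sum>x\<in>supp (deriv e A). deriv e A x * cont (deriv f A) f x y)"
| "deriv (ELoop e b) A = (\<lambda>x. case x of
       OAcc \<Rightarrow> (if \<not> beval b A then 1 else 0)
     | ORej \<Rightarrow> (if beval b A then cstar (deriv e A OAcc) * deriv e A ORej else 0)
     | OOut v \<Rightarrow> (if beval b A then cstar (deriv e A OAcc) * deriv e A (OOut v) else 0)
     | OAct p g \<Rightarrow> (case g of
           ESeq e' h \<Rightarrow> (if h = ELoop e b \<and> beval b A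
                          then cstar (deriv e A OAcc) * deriv e A (OAct p e') else 0)
         | _ \<Rightarrow> 0))"

definition is_aut :: "'x set \<Rightarrow> ('x \<Rightarrow> 'a \<Rightarrow> ('v, 'p, 'x) outc \<Rightarrow> 's::zero) \<Rightarrow> bool" where
  "is_aut X \<beta> = (\<forall>x\<in>X. \<forall>A. finite (supp (\<beta> x A)) \<and>
       (\<forall>p y. \<beta> x A (OAct p y) \<noteq> 0 \<longrightarrow> y \<in> X))"

definition is_hom :: "'x set \<Rightarrow> ('x \<Rightarrow> 'a \<Rightarrow> ('v, 'p, 'x) outc \<Rightarrow> 's::comm_monoid_add)
    \<Rightarrow> 'y set \<Rightarrow> ('y \<Rightarrow> 'a \<Rightarrow> ('v, 'p, 'y) outc \<Rightarrow> 's) \<Rightarrow> ('x \<Rightarrow> 'y) \<Rightarrow> bool" where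
  "is_hom X \<beta> Y \<gamma> h = (\<forall>x\<in>X. h x \<in> Y \<and> (\<forall>A.
       (\<forall>ob. \<not> is_act ob \<longrightarrow> \<gamma> (h x) A (map_outc id id h ob) = \<beta> x A ob) \<and>
       (\<forall>p y. y \<in> Y \<longrightarrow>
          \<gamma> (h x) A (OAct p y) = mass (\<beta> x A) {OAct p x' | x'. x' \<in> X \<and> h x' = y})))"

definition bisim :: "(('t::finite, 'p, 'v, 's::wgkat_semiring) exp \<times> ('t, 'p, 'v, 's) exp) set \<Rightarrow> bool" where
  "bisim R = (\<exists>\<rho>. is_aut R \<rho> \<and> is_hom R \<rho> UNIV deriv fst \<and> is_hom R \<rho> UNIV deriv snd)"

definition bisimilar :: "('t::finite, 'p, 'v, 's::wgkat_semiring) exp \<Rightarrow> ('t, 'p, 'v, 's) exp \<Rightarrow> bool"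
    (infix "\<sim>\<^sub>w" 50) where
  "e \<sim>\<^sub>w f = (\<exists>R. bisim R \<and> (e, f) \<in> R)"

primrec Eterm :: "('t, 'p, 'v, 's::wgkat_semiring) exp \<Rightarrow> 't set \<Rightarrow> 's" where
  "Eterm (EAct p) A = 0"
| "Eterm (EOut v) A = 0"
| "Eterm (ETest b) A = (if beval b A then 1 else 0)"
| "Eterm (EWeight e r s f) A = r * Eterm e A + s * Eterm f A"
| "Eterm (EGuard e b f) A = (if beval b A then Eterm e A else Eterm f A)"
| "Eterm (ESeq e f) A = Eterm e A * Eterm f A"
| "Eterm (ELoop e b) A = (if beval (BNot b) A then 1 else 0)"

inductive wequiv :: "('t::finite, 'p, 'v, 's::wgkat_semiring) exp \<Rightarrow> ('t, 'p, 'v, 's) exp \<Rightarrow> bool"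
    (infix "\<equiv>\<^sub>w" 50) where
  refl: "e \<equiv>\<^sub>w e"
| sym: "e \<equiv>\<^sub>w f \<Longrightarrow> f \<equiv>\<^sub>w e"
| trans: "e \<equiv>\<^sub>w f \<Longrightarrow> f \<equiv>\<^sub>w g \<Longrightarrow> e \<equiv>\<^sub>w g"
| test_ba: "ba_equiv b c \<Longrightarrow> ETest b \<equiv>\<^sub>w ETest c"
| guard_ba: "ba_equiv b c \<Longrightarrow> EGuard e b f \<equiv>\<^sub>w EGuard e c f"
| loop_ba: "ba_equiv b c \<Longrightarrow> ELoop e b \<equiv>\<^sub>w ELoop e c"
| guard_cong: "e \<equiv>\<^sub>w e' \<Longrightarrow> f \<equiv>\<^sub>w f' \<Longrightarrow> EGuard e b f \<equiv>\<^sub>w EGuard e' b f'"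
| seq_cong: "e \<equiv>\<^sub>w e' \<Longrightarrow> f \<equiv>\<^sub>w f' \<Longrightarrow> ESeq e f \<equiv>\<^sub>w ESeq e' f'"
| loop_cong: "e \<equiv>\<^sub>w e' \<Longrightarrow> ELoop e b \<equiv>\<^sub>w ELoop e' b"
| weight_cong: "e \<equiv>\<^sub>w e' \<Longrightarrow> f \<equiv>\<^sub>w f' \<Longrightarrow> EWeight e r s f \<equiv>\<^sub>w EWeight e' r s f'"
| G1: "EGuard e b e \<equiv>\<^sub>w e"
| G2: "EGuard e b f \<equiv>\<^sub>w EGuard (ESeq (ETest b) e) b f"
| G3: "EGuard e b f \<equiv>\<^sub>w EGuard f (BNot b) e"
| G4: "EGuard (EGuard e b f) c g \<equiv>\<^sub>w EGuard e (BAnd b c) (EGuard f c g)"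
| D1: "EWeight e r s (EGuard f b g) \<equiv>\<^sub>w EGuard (EWeight e r s f) b (EWeight e r s g)"
| D2: "EWeight e r s (EWeight f t u g) \<equiv>\<^sub>w EWeight e r 1 (EWeight f (s * t) (s * u) g)"
| D3: "ESeq (ETest b) (EWeight e r s f) \<equiv>\<^sub>w
        ESeq (ETest b) (EWeight (ESeq (ETest b) e) r s (ESeq (ETest b) f))"
| S1l: "ESeq (ETest BOne) e \<equiv>\<^sub>w e"
| S1r: "e \<equiv>\<^sub>w ESeq e (ETest BOne)"
| S2: "ESeq (ESeq e f) g \<equiv>\<^sub>w ESeq e (ESeq f g)"
| S3: "ESeq (ETest BZero) e \<equiv>\<^sub>w ETest BZero"
| S4: "ESeq (EWeight e r s f) g \<equiv>\<^sub>w EWeight (ESeq e g) r s (ESeq f g)"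
| S5: "ESeq (EGuard e b f) g \<equiv>\<^sub>w EGuard (ESeq e g) b (ESeq f g)"
| S6: "ESeq (EOut v) e \<equiv>\<^sub>w EOut v"
| S7: "ESeq (ETest b) (ETest c) \<equiv>\<^sub>w ETest (BAnd b c)"
| L1: "ELoop e b \<equiv>\<^sub>w EGuard (ESeq e (ELoop e b)) b (ETest BOne)"
| C1: "wdot 1 \<equiv>\<^sub>w ETest BOne"
| C2: "ESeq (wdot 0) e \<equiv>\<^sub>w wdot 0"
| W1: "EWeight e r s e \<equiv>\<^sub>w ESeq (wdot (r + s)) e"
| W2: "EWeight e r s f \<equiv>\<^sub>w EWeight f s r e"
| W3: "EWeight e r s (EWeight f t u g) \<equiv>\<^sub>w EWeight (EWeight e r (s * t) f) 1 (s * u) g"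
| W4: "EWeight e (r * u) s f \<equiv>\<^sub>w EWeight (ESeq (wdot u) e) r s f"
| L2: "e \<equiv>\<^sub>w EGuard (EWeight f r s (ETest BOne)) c g \<Longrightarrow>
        ESeq (ETest c) (ELoop e b) \<equiv>\<^sub>w
        ESeq (ETest c) (EGuard (ESeq (wdot (cstar s * r)) (ESeq f (ELoop e b))) b (ETest BOne))"
| F1: "g \<equiv>\<^sub>w EGuard (ESeq e g) b f \<Longrightarrow> (\<forall>A. Eterm e A = 0) \<Longrightarrow> g \<equiv>\<^sub>w ESeq (ELoop e b) f"

end

theory Submission
  imports Defs
begin


lemma supp_delta: "supp (delta z) \<subseteq> {z}"
  by (auto simp: supp_def delta_def)

lemma mass_eq_sum:
  assumes "finite U" "U \<subseteq> T" "T \<inter> supp \<nu> \<subseteq> U"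
  shows "mass \<nu> T = sum \<nu> U"
  unfolding mass_def
  by (rule sum.mono_neutral_left) (use assms in \<open>auto simp: supp_def\<close>)

lemma mass_lin:
  fixes a b :: "'a \<Rightarrow> 's::semiring_0"
  assumes "finite (supp a)" "finite (supp b)"
  shows "mass (\<lambda>x. r * a x + s * b x) T = r * mass a T + s * mass b T"
proof -
  let ?U = "T \<inter> (supp a \<union> supp b)"
  have f: "finite ?U" using assms by auto
  have "mass (\<lambda>x. r * a x + s * b x) T = sum (\<lambda>x. r * a x + s * b x) ?U"
    by (rule mass_eq_sum[OF f]) (auto simp: supp_def)
  moreover have "mass a T = sum a ?U"
    by (rule mass_eq_sum[OF f]) (auto simp: supp_def)
  moreover have "mass b T = sum b ?U"
    by (rule mass_eq_sum[OF f]) (auto simp: supp_def)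
  ultimately show ?thesis by (simp add: sum.distrib sum_distrib_left)
qed

lemma mass_sum:
  fixes a :: "'b \<Rightarrow> 's::semiring_0"
  assumes "finite X" "\<And>x. x \<in> X \<Longrightarrow> finite (supp (k x))"
  shows "mass (\<lambda>y. \<Sum>x\<in>X. a x * k x y) T = (\<Sum>x\<in>X. a x * mass (k x) T)"
proof -
  let ?U = "T \<inter> (\<Union>x\<in>X. supp (k x))"
  have f: "finite ?U" using assms by auto
  have "mass (\<lambda>y. \<Sum>x\<in>X. a x * k x y) T = sum (\<lambda>y. \<Sum>x\<in>X. a x * k x y) ?U"
  proof (rule mass_eq_sum[OF f])
    show "T \<inter> supp (\<lambda>y. \<Sum>x\<in>X. a x * k x y) \<subseteq> ?U"
    proof
      fix y assume y: "y \<in> T \<inter> supp (\<lambda>y. \<Sum>x\<in>X. a x * k x y)"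
      have "\<exists>x\<in>X. k x y \<noteq> 0"
      proof (rule ccontr)
        assume "\<not> ?thesis"
        then have "(\<Sum>x\<in>X. a x * k x y) = 0" by simp
        with y show False by (simp add: supp_def)
      qed
      with y show "y \<in> ?U" by (auto simp: supp_def)
    qed
  qed auto
  also have "\<dots> = (\<Sum>x\<in>X. a x * sum (k x) ?U)"
    by (simp add: sum.swap[of _ _ X] sum_distrib_left)
  also have "\<dots> = (\<Sum>x\<in>X. a x * mass (k x) T)"
  proof (rule sum.cong[OF HOL.refl])
    fix x assume x: "x \<in> X"
    have "mass (k x) T = sum (k x) ?U"
      by (rule mass_eq_sum[OF f]) (use x in auto)
    then show "a x * sum (k x) ?U = a x * mass (k x) T" by simp
  qed
  finally show ?thesis .
qed

lemma mass_delta: "mass (delta z) T = (if z \<in> T then 1 else (0::'s::{zero,one,comm_monoid_add}))"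
proof (cases "z \<in> T")
  case True
  then have "mass (delta z) T = sum (delta z) {z}"
    by (intro mass_eq_sum) (auto simp: supp_def delta_def)
  then show ?thesis using True by (simp add: delta_def)
next
  case False
  then have "mass (delta z) T = sum (delta z) {}"
    by (intro mass_eq_sum) (auto simp: supp_def delta_def)
  then show ?thesis using False by simp
qed



lemma supp_sum_sub: "supp (\<lambda>y. \<Sum>x\<in>X. g x y) \<subseteq> (\<Union>x\<in>X. supp (g x))"
proof
  fix y assume y: "y \<in> supp (\<lambda>y. \<Sum>x\<in>X. g x y)"
  have "\<exists>x\<in>X. g x y \<noteq> 0"
  proof (rule ccontr)
    assume "\<not> ?thesis"
    then have "(\<Sum>x\<in>X. g x y) = 0" by simp
    with y show False by (simp add: supp_def)
  qed
  then show "y \<in> (\<Union>x\<in>X. supp (g x))" by (auto simp: supp_def)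
qed

definition hL :: "('t, 'p, 'v, 's) exp \<Rightarrow> ('v, 'p, ('t, 'p, 'v, 's) exp) outc \<Rightarrow> ('v, 'p, ('t, 'p, 'v, 's) exp) outc" where
  "hL l x = (case x of OAct q e' \<Rightarrow> OAct q (ESeq e' l) | _ \<Rightarrow> x)"

lemma inj_hL: "inj (hL l)"
  unfolding inj_def hL_def by (auto split: outc.splits)

lemma supp_loop: "supp (deriv (ELoop e b) A) \<subseteq> {OAcc, ORej} \<union> hL (ELoop e b) ` supp (deriv e A)"
proof
  fix y assume y: "y \<in> supp (deriv (ELoop e b) A)"
  show "y \<in> {OAcc, ORej} \<union> hL (ELoop e b) ` supp (deriv e A)"
  proof (cases y)
    case (OOut v)
    with y have "deriv e A (OOut v) \<noteq> 0" by (auto simp: supp_def split: if_splits)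
    then have "OOut v \<in> supp (deriv e A)" by (simp add: supp_def)
    moreover have "hL (ELoop e b) (OOut v) = y" using OOut by (simp add: hL_def)
    ultimately show ?thesis by blast
  next
    case (OAct q g)
    with y obtain e' where g: "g = ESeq e' (ELoop e b)" and "deriv e A (OAct q e') \<noteq> 0"
      by (auto simp: supp_def split: exp.splits if_splits) (metis mult_zero_right)
    then have "OAct q e' \<in> supp (deriv e A)" by (simp add: supp_def)
    moreover have "hL (ELoop e b) (OAct q e') = y" using OAct g by (simp add: hL_def)
    ultimately show ?thesis by blast
  qed auto
qed

lemma deriv_seq_eq: "deriv (ESeq e f) A = (\<lambda>y. \<Sum>x\<in>supp (deriv e A). deriv e A x * cont (deriv f A) f x y)"
  by simp

lemma fin_deriv: "finite (supp (deriv e A))"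
proof (induction e)
  case (EAct x)
  then show ?case using supp_delta by (simp add: finite_subset[OF supp_delta])
next
  case (ETest x)
  have "supp (deriv (ETest x) A) \<subseteq> {OAcc, ORej}"
    using supp_delta[of OAcc] supp_delta[of ORej] by auto
  then show ?case by (rule finite_subset) simp
next
  case (EGuard e1 x2 e2)
  then show ?case by simp
next
  case (ESeq e1 e2)
  let ?X = "supp (deriv e1 A)"
  have "supp (deriv (ESeq e1 e2) A) \<subseteq> (\<Union>x\<in>?X. supp (\<lambda>y. deriv e1 A x * cont (deriv e2 A) e2 x y))"
    unfolding deriv_seq_eq by (rule supp_sum_sub)
  moreover have "finite (supp (\<lambda>y. deriv e1 A x * cont (deriv e2 A) e2 x y))" for x
  proof -
    have "supp (\<lambda>y. deriv e1 A x * cont (deriv e2 A) e2 x y) \<subseteq> supp (cont (deriv e2 A) e2 x)"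
      by (auto simp: supp_def)
    moreover have "finite (supp (cont (deriv e2 A) e2 x))"
      using ESeq by (auto simp: cont_def finite_subset[OF supp_delta] split: outc.splits)
    ultimately show ?thesis by (rule finite_subset)
  qed
  ultimately show ?case using ESeq by (meson finite_UN_I finite_subset)
next
  case (ELoop e1 x2)
  then show ?case using supp_loop[of e1 x2 A] by (meson finite_Un finite_imageI finite.intros finite_subset)
next
  case (EOut x)
  then show ?case by (simp add: finite_subset[OF supp_delta])
next
  case (EWeight e1 x2 x3 e2)
  have "supp (deriv (EWeight e1 x2 x3 e2) A) \<subseteq> supp (deriv e1 A) \<union> supp (deriv e2 A)"
    by (auto simp: supp_def)
  then show ?case using EWeight by (meson finite_Un finite_subset)
qed



lemma sum_supp_delta:
  fixes g :: "'a \<Rightarrow> 's::semiring_0"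
  assumes "finite (supp g)"
  shows "(\<Sum>x\<in>supp g. if x = a then g x * c else 0) = g a * c"
  using assms by (simp add: sum.delta'[unfolded eq_commute[of _ a]] supp_def)

lemma cont_nonact:
  assumes "\<not> is_act ob"
  shows "cont df f x ob = (if x = OAcc then df ob else if x = ob then 1 else 0)"
  using assms by (cases ob; cases x) (auto simp: cont_def delta_def)

lemma deriv_seq_nonact:
  assumes "\<not> is_act ob"
  shows "deriv (ESeq e f) A ob = (if ob = OAcc then 0 else deriv e A ob) + deriv e A OAcc * deriv f A ob"
proof -
  let ?g = "deriv e A"
  have fin: "finite (supp ?g)" by (rule fin_deriv)
  have "deriv (ESeq e f) A ob = (\<Sum>x\<in>supp ?g. ?g x * (if x = OAcc then deriv f A ob else if x = ob then 1 else 0))"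
    using assms by (simp add: cont_nonact)
  also have "\<dots> = (\<Sum>x\<in>supp ?g. (if x = OAcc then ?g x * deriv f A ob else 0) + (if x = ob then ?g x * (if ob = OAcc then 0 else 1) else 0))"
    by (rule sum.cong) auto
  also have "\<dots> = ?g OAcc * deriv f A ob + ?g ob * (if ob = OAcc then 0 else 1)"
    by (simp add: sum.distrib sum_supp_delta[OF fin])
  finally show ?thesis by (simp add: add.commute)
qed

lemma deriv_seq_acc[simp]: "deriv (ESeq e f) A OAcc = deriv e A OAcc * deriv f A OAcc"
  using deriv_seq_nonact[of OAcc] by simp
lemma deriv_seq_rej[simp]: "deriv (ESeq e f) A ORej = deriv e A ORej + deriv e A OAcc * deriv f A ORej"
  using deriv_seq_nonact[of ORej] by simp
lemma deriv_seq_out[simp]: "deriv (ESeq e f) A (OOut v) = deriv e A (OOut v) + deriv e A OAcc * deriv f A (OOut v)"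
  using deriv_seq_nonact[of "OOut v"] by simp

lemma mass_weight[simp]: "mass (deriv (EWeight e r s f) A) T = r * mass (deriv e A) T + s * mass (deriv f A) T"
  by (simp add: mass_lin fin_deriv)

lemma mass_test[simp]: "mass (deriv (ETest b) A) (OAct p ` S) = 0"
  by (simp add: mass_delta image_iff)
lemma mass_out[simp]: "mass (deriv (EOut v) A) (OAct p ` S) = 0"
  by (simp add: mass_delta image_iff)

definition pre :: "('t, 'p, 'v, 's) exp \<Rightarrow> ('t, 'p, 'v, 's) exp set \<Rightarrow> ('t, 'p, 'v, 's) exp set" where
  "pre f S = {x. ESeq x f \<in> S}"

lemma mass_cont:
  "mass (cont df f x) (OAct p ` S) = (if x = OAcc then mass df (OAct p ` S) else 0)
     + (if x \<in> OAct p ` pre f S then 1 else (0::'s::wgkat_semiring))"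
  by (cases x) (auto simp: cont_def mass_delta pre_def image_iff)

lemma mass_seq[simp]:
  "mass (deriv (ESeq e f) A) (OAct p ` S) =
     deriv e A OAcc * mass (deriv f A) (OAct p ` S) + mass (deriv e A) (OAct p ` pre f S)"
proof -
  let ?g = "deriv e A" and ?T = "OAct p ` pre f S" and ?m = "mass (deriv f A) (OAct p ` S)"
  have fin: "finite (supp ?g)" by (rule fin_deriv)
  have fin2: "finite (supp (cont (deriv f A) f x))" for x
    using fin_deriv[of f A] by (auto simp: cont_def finite_subset[OF supp_delta] split: outc.splits)
  have "mass (deriv (ESeq e f) A) (OAct p ` S) = (\<Sum>x\<in>supp ?g. ?g x * mass (cont (deriv f A) f x) (OAct p ` S))"
    unfolding deriv_seq_eq by (rule mass_sum[OF fin fin2])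
  also have "\<dots> = (\<Sum>x\<in>supp ?g. (if x = OAcc then ?g x * ?m else 0) + (if x \<in> ?T then ?g x else 0))"
    by (rule sum.cong) (auto simp: mass_cont distrib_left)
  also have "\<dots> = ?g OAcc * ?m + sum ?g {x\<in>supp ?g. x \<in> ?T}"
    by (simp add: sum.distrib sum_supp_delta[OF fin] sum.inter_filter[OF fin])
  also have "{x\<in>supp ?g. x \<in> ?T} = ?T \<inter> supp ?g" by auto
  finally show ?thesis by (simp add: mass_def)
qed

lemma mass_loop[simp]:
  "mass (deriv (ELoop e b) A) (OAct p ` S) =
     (if beval b A then cstar (deriv e A OAcc) * mass (deriv e A) (OAct p ` pre (ELoop e b) S) else 0)"
proof (cases "beval b A")
  case True
  let ?g = "deriv e A" and ?l = "ELoop e b"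
  let ?Z = "supp ?g \<inter> OAct p ` pre ?l S"
  have fin: "finite ?Z" using fin_deriv[of e A] by auto
  have "mass (deriv ?l A) (OAct p ` S) = sum (deriv ?l A) (hL ?l ` ?Z)"
  proof (rule mass_eq_sum)
    show "finite (hL ?l ` ?Z)" using fin by simp
    show "hL ?l ` ?Z \<subseteq> OAct p ` S" by (auto simp: hL_def pre_def)
    show "OAct p ` S \<inter> supp (deriv ?l A) \<subseteq> hL ?l ` ?Z"
    proof
      fix y assume y: "y \<in> OAct p ` S \<inter> supp (deriv ?l A)"
      then obtain s where s: "y = OAct p s" "s \<in> S" by auto
      with y obtain e' where g: "s = ESeq e' ?l" and nz: "deriv e A (OAct p e') \<noteq> 0"
        by (auto simp: supp_def split: exp.splits if_splits) (metis mult_zero_right)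
      then have "OAct p e' \<in> ?Z" using s by (auto simp: supp_def pre_def)
      moreover have "hL ?l (OAct p e') = y" using s g by (simp add: hL_def)
      ultimately show "y \<in> hL ?l ` ?Z" by blast
    qed
  qed
  also have "\<dots> = sum (deriv ?l A \<circ> hL ?l) ?Z"
    by (rule sum.reindex) (meson inj_hL inj_on_subset subset_UNIV)
  also have "\<dots> = sum (\<lambda>z. cstar (?g OAcc) * ?g z) ?Z"
    by (rule sum.cong) (auto simp: hL_def True)
  also have "\<dots> = cstar (?g OAcc) * mass ?g (OAct p ` pre ?l S)"
    by (simp add: sum_distrib_left mass_def Int_commute)
  finally show ?thesis using True by simp
next
  case False
  have "mass (deriv (ELoop e b) A) (OAct p ` S) = sum (deriv (ELoop e b) A) {}"
    by (rule mass_eq_sum) (use False in \<open>auto simp: supp_def split: exp.splits\<close>)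
  then show ?thesis using False by simp
qed



lemma deriv_weight_app: "deriv (EWeight e r s f) A x = r * deriv e A x + s * deriv f A x" by simp
lemma deriv_weight_n: "deriv (EWeight e r s f) A OAcc = r * deriv e A OAcc + s * deriv f A OAcc"
  "deriv (EWeight e r s f) A ORej = r * deriv e A ORej + s * deriv f A ORej"
  "deriv (EWeight e r s f) A (OOut v) = r * deriv e A (OOut v) + s * deriv f A (OOut v)" by simp_all
lemma deriv_guard: "deriv (EGuard e b f) A = (if beval b A then deriv e A else deriv f A)" by simp
lemma deriv_act: "deriv (EAct q) A = delta (OAct q (ETest BOne))" by simp

lemma deriv_test: "deriv (ETest b) A OAcc = (if beval b A then 1 else 0)"
  "deriv (ETest b) A ORej = (if beval b A then 0 else 1)" "deriv (ETest b) A (OOut v) = 0"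
  by (simp_all add: delta_def)

lemma deriv_out: "deriv (EOut u) A OAcc = 0"
  "deriv (EOut u) A ORej = 0" "deriv (EOut u) A (OOut v) = (if v = u then 1 else 0)"
  by (simp_all add: delta_def)

lemma deriv_loop: "deriv (ELoop e b) A OAcc = (if beval b A then 0 else 1)"
  "deriv (ELoop e b) A ORej = (if beval b A then cstar (deriv e A OAcc) * deriv e A ORej else 0)"
  "deriv (ELoop e b) A (OOut v) = (if beval b A then cstar (deriv e A OAcc) * deriv e A (OOut v) else 0)"
  by simp_all

lemma deriv_acc_Eterm: "deriv e A OAcc = Eterm e A"
  by (induction e) (auto simp: delta_def simp del: deriv.simps(6))

declare deriv.simps[simp del]

lemma deriv_wdot: "deriv (wdot r) A OAcc = r" "deriv (wdot r) A ORej = 0" "deriv (wdot r) A (OOut v) = 0"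
  "mass (deriv (wdot r) A) (OAct p ` S) = 0"
  by (simp_all add: wdot_def deriv_weight_n deriv_test)

lemmas dsimps[simp] = deriv_weight_n deriv_guard deriv_wdot deriv_test deriv_out deriv_loop

definition closed :: "('t::finite, 'p, 'v, 's::wgkat_semiring) exp set \<Rightarrow> bool" where
  "closed S = (\<forall>x y. x \<equiv>\<^sub>w y \<longrightarrow> x \<in> S \<longrightarrow> y \<in> S)"

definition eqv :: "(('v, 'p, ('t::finite, 'p, 'v, 's::wgkat_semiring) exp) outc \<Rightarrow> 's) \<Rightarrow> (('v, 'p, ('t, 'p, 'v, 's) exp) outc \<Rightarrow> 's) \<Rightarrow> bool" where
  "eqv \<nu> \<mu> = (\<nu> OAcc = \<mu> OAcc \<and> \<nu> ORej = \<mu> ORej \<and> (\<forall>v. \<nu> (OOut v) = \<mu> (OOut v)) \<and>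
     (\<forall>p S. closed S \<longrightarrow> mass \<nu> (OAct p ` S) = mass \<mu> (OAct p ` S)))"

lemma eqvI:
  assumes "\<nu> OAcc = \<mu> OAcc" "\<nu> ORej = \<mu> ORej" "\<And>v. \<nu> (OOut v) = \<mu> (OOut v)"
    "\<And>p S. closed S \<Longrightarrow> mass \<nu> (OAct p ` S) = mass \<mu> (OAct p ` S)"
  shows "eqv \<nu> \<mu>"
  using assms unfolding eqv_def by blast

lemma eqvD:
  assumes "eqv \<nu> \<mu>"
  shows "\<nu> OAcc = \<mu> OAcc" "\<nu> ORej = \<mu> ORej" "\<nu> (OOut v) = \<mu> (OOut v)"
    "closed S \<Longrightarrow> mass \<nu> (OAct p ` S) = mass \<mu> (OAct p ` S)"
  using assms unfolding eqv_def by blast+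

lemma eqv_refl: "eqv \<nu> \<nu>" by (simp add: eqv_def)
lemma eqv_sym: "eqv \<nu> \<mu> \<Longrightarrow> eqv \<mu> \<nu>" by (simp add: eqv_def)
lemma eqv_trans: "eqv \<nu> \<mu> \<Longrightarrow> eqv \<mu> \<kappa> \<Longrightarrow> eqv \<nu> \<kappa>" by (simp add: eqv_def)

lemma closed_mem: "closed S \<Longrightarrow> x \<equiv>\<^sub>w y \<Longrightarrow> (x \<in> S) = (y \<in> S)"
  unfolding closed_def by (meson wequiv.sym)

lemma closed_pre: "closed S \<Longrightarrow> closed (pre f S)"
  unfolding closed_def pre_def by (auto intro: wequiv.seq_cong wequiv.refl)

lemma pre_cong: "closed S \<Longrightarrow> f \<equiv>\<^sub>w f' \<Longrightarrow> pre f S = pre f' S"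
  unfolding pre_def using closed_mem wequiv.seq_cong wequiv.refl by blast

lemma cstar_unfold: "cstar a = 1 + a * cstar a"
  using conway_prod[of a 1] by simp

lemma cstar_unfold_mult: "cstar a * x = x + a * (cstar a * x)"
proof -
  have "cstar a * x = (1 + a * cstar a) * x" using cstar_unfold[of a] by simp
  then show ?thesis by (simp add: algebra_simps)
qed

lemma key_L2: "cstar (r * a + s) * (r * x) = cstar s * r * (x + a * (cstar (r * a + s) * (r * x)))"
proof -
  let ?q = "r * a * cstar s"
  have cs: "cstar (r * a + s) = cstar s * cstar ?q"
    using conway_sum[of s "r * a"] by (simp add: add.commute)
  have "cstar ?q * r = r + ?q * (cstar ?q * r)" by (rule cstar_unfold_mult)
  then have "cstar s * (cstar ?q * r) = cstar s * (r + ?q * (cstar ?q * r))" by simp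
  then have "cstar s * cstar ?q * r = cstar s * r + cstar s * r * a * (cstar s * cstar ?q * r)"
    by (simp add: algebra_simps)
  then have "cstar (r * a + s) * r = cstar s * r + cstar s * r * a * (cstar (r * a + s) * r)"
    by (simp add: cs)
  then have "cstar (r * a + s) * r * x = (cstar s * r + cstar s * r * a * (cstar (r * a + s) * r)) * x"
    by simp
  then show ?thesis by (simp add: algebra_simps)
qed

lemma cstar_zero: "cstar 0 = 1"
  using cstar_unfold[of 0] by simp



lemma sound1:
  fixes e f :: "('t::finite,'p,'v,'s::wgkat_semiring) exp"
  shows "e \<equiv>\<^sub>w f \<Longrightarrow> \<forall>A. eqv (deriv e A) (deriv f A)"
proof (induction rule: wequiv.induct)
  case (refl e) then show ?case by (simp add: eqv_refl)
next
  case (sym e f) then show ?case by (simp add: eqv_sym)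
next
  case (trans e f g) then show ?case by (meson eqv_trans)
next
  case (test_ba b c) then show ?case by (simp add: eqv_refl ba_equiv_def deriv.simps)
next
  case (guard_ba b c e f) then show ?case by (simp add: eqv_refl ba_equiv_def)
next
  case (loop_ba b c e)
  show ?case
  proof
    fix A
    show "eqv (deriv (ELoop e b) A) (deriv (ELoop e c) A)"
    proof (rule eqvI)
      fix p and S :: "('t,'p,'v,'s) exp set" assume S: "closed S"
      have "pre (ELoop e b) S = pre (ELoop e c) S" by (rule pre_cong[OF S wequiv.loop_ba[OF loop_ba]])
      then show "mass (deriv (ELoop e b) A) (OAct p ` S) = mass (deriv (ELoop e c) A) (OAct p ` S)"
        using loop_ba by (simp add: ba_equiv_def)
    qed (use loop_ba in \<open>simp_all add: ba_equiv_def\<close>)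
  qed
next
  case (guard_cong e e' f f' b) then show ?case by simp
next
  case (seq_cong e e' f f')
  show ?case
  proof
    fix A
    have E: "eqv (deriv e A) (deriv e' A)" and F: "eqv (deriv f A) (deriv f' A)"
      using seq_cong by auto
    show "eqv (deriv (ESeq e f) A) (deriv (ESeq e' f') A)"
    proof (rule eqvI)
      fix p and S :: "('t,'p,'v,'s) exp set" assume S: "closed S"
      have "pre f S = pre f' S" by (rule pre_cong[OF S seq_cong(2)])
      then show "mass (deriv (ESeq e f) A) (OAct p ` S) = mass (deriv (ESeq e' f') A) (OAct p ` S)"
        using eqvD[OF E] eqvD[OF F] S closed_pre[OF S, of f'] by simp
    qed (use eqvD[OF E] eqvD[OF F] in simp_all)
  qed
next
  case (loop_cong e e' b)
  show ?case
  proof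
    fix A
    have E: "eqv (deriv e A) (deriv e' A)" using loop_cong by auto
    show "eqv (deriv (ELoop e b) A) (deriv (ELoop e' b) A)"
    proof (rule eqvI)
      fix p and S :: "('t,'p,'v,'s) exp set" assume S: "closed S"
      have "pre (ELoop e b) S = pre (ELoop e' b) S" by (rule pre_cong[OF S wequiv.loop_cong[OF loop_cong(1)]])
      then show "mass (deriv (ELoop e b) A) (OAct p ` S) = mass (deriv (ELoop e' b) A) (OAct p ` S)"
        using eqvD[OF E] closed_pre[OF S, of "ELoop e' b"] by simp
    qed (use eqvD[OF E] in \<open>simp_all\<close>)
  qed
next
  case (weight_cong e e' f f' r s)
  show ?case
  proof
    fix A
    have E: "eqv (deriv e A) (deriv e' A)" and F: "eqv (deriv f A) (deriv f' A)"
      using weight_cong by auto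
    show "eqv (deriv (EWeight e r s f) A) (deriv (EWeight e' r s f') A)"
      by (rule eqvI) (use eqvD[OF E] eqvD[OF F] in simp_all)
  qed
next
  case (G1 e b) then show ?case by (simp add: eqv_refl)
next
  case (G2 e b f) then show ?case by (intro allI eqvI) simp_all
next
  case (G3 e b f) then show ?case by (simp add: eqv_refl)
next
  case (G4 e b f c g) then show ?case by (simp add: eqv_refl)
next
  case (D1 e r s f b g) then show ?case by (intro allI eqvI) (simp_all add: algebra_simps)
next
  case (D2 e r s f t u g) then show ?case by (intro allI eqvI) (simp_all add: algebra_simps)
next
  case (D3 b e r s f) then show ?case by (intro allI eqvI) (simp_all add: algebra_simps)
next
  case (S1l e) then show ?case by (intro allI eqvI) (simp_all add: algebra_simps)
next
  case (S1r e)
  show ?case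
  proof (intro allI eqvI)
    fix A p and S :: "('t,'p,'v,'s) exp set" assume S: "closed S"
    have "pre (ETest BOne) S = S" unfolding pre_def using closed_mem[OF S wequiv.S1r] by blast
    then show "mass (deriv e A) (OAct p ` S) = mass (deriv (ESeq e (ETest BOne)) A) (OAct p ` S)"
      by simp
  qed simp_all
next
  case (S2 e f g)
  show ?case
  proof (intro allI eqvI)
    fix A p and S :: "('t,'p,'v,'s) exp set" assume S: "closed S"
    have "pre f (pre g S) = pre (ESeq f g) S" unfolding pre_def using closed_mem[OF S wequiv.S2] by blast
    then show "mass (deriv (ESeq (ESeq e f) g) A) (OAct p ` S) = mass (deriv (ESeq e (ESeq f g)) A) (OAct p ` S)"
      by (simp add: algebra_simps)
  qed (simp_all add: algebra_simps)
next
  case (S3 e) then show ?case by (intro allI eqvI) (simp_all add: algebra_simps)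
next
  case (S4 e r s f g) then show ?case by (intro allI eqvI) (simp_all add: algebra_simps)
next
  case (S5 e b f g) then show ?case by (intro allI eqvI) (simp_all add: algebra_simps)
next
  case (S6 v e) then show ?case by (intro allI eqvI) (simp_all add: algebra_simps)
next
  case (S7 b c) then show ?case by (intro allI eqvI) (simp_all add: algebra_simps)
next
  case (L1 e b)
  show ?case
  proof (intro allI eqvI)
    fix A p and S :: "('t,'p,'v,'s) exp set" assume S: "closed S"
    show "mass (deriv (ELoop e b) A) (OAct p ` S) = mass (deriv (EGuard (ESeq e (ELoop e b)) b (ETest BOne)) A) (OAct p ` S)"
      using cstar_unfold_mult[of "deriv e A OAcc"] by (simp (no_asm_use) add: add.commute) (metis add.commute)
  next
    fix A show "deriv (ELoop e b) A ORej = deriv (EGuard (ESeq e (ELoop e b)) b (ETest BOne)) A ORej"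
      using cstar_unfold_mult[of "deriv e A OAcc"] by (simp (no_asm_use) add: add.commute) (metis add.commute)
  next
    fix A v show "deriv (ELoop e b) A (OOut v) = deriv (EGuard (ESeq e (ELoop e b)) b (ETest BOne)) A (OOut v)"
      using cstar_unfold_mult[of "deriv e A OAcc"] by (simp (no_asm_use) add: add.commute) (metis add.commute)
  qed simp
next
  case C1 then show ?case by (intro allI eqvI) (simp_all add: wdot_def)
next
  case (C2 e) then show ?case by (intro allI eqvI) (simp_all add: algebra_simps)
next
  case (W1 e r s) then show ?case by (intro allI eqvI) (simp_all add: algebra_simps)
next
  case (W2 e r s f) then show ?case by (intro allI eqvI) (simp_all add: algebra_simps)
next
  case (W3 e r s f t u g) then show ?case by (intro allI eqvI) (simp_all add: algebra_simps)
next
  case (W4 e r u s f) then show ?case by (intro allI eqvI) (simp_all add: algebra_simps)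
next
  case (L2 e f r s c g b)
  show ?case
  proof
    fix A
    show "eqv (deriv (ESeq (ETest c) (ELoop e b)) A)
      (deriv (ESeq (ETest c) (EGuard (ESeq (wdot (cstar s * r)) (ESeq f (ELoop e b))) b (ETest BOne))) A)"
    proof (cases "beval c A")
      case False then show ?thesis by (intro eqvI) simp_all
    next
      case True
      have E: "eqv (deriv e A) (deriv (EGuard (EWeight f r s (ETest BOne)) c g) A)"
        using L2 by blast
      note Ed = eqvD[OF E, simplified True, simplified]
      show ?thesis
      proof (cases "beval b A")
        case False then show ?thesis using True by (intro eqvI) simp_all
      next
        case bT: True
        have K: "cstar (r * deriv f A OAcc + s) * (r * x) = cstar s * r * (deriv f A OAcc * (cstar (r * deriv f A OAcc + s) * (r * x)) + x)" for x
          using key_L2[of r "deriv f A OAcc" s x] by (simp add: add.commute)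
        show ?thesis
        proof (rule eqvI)
          fix p and S :: "('t,'p,'v,'s) exp set" assume S: "closed S"
          show "mass (deriv (ESeq (ETest c) (ELoop e b)) A) (OAct p ` S) =
           mass (deriv (ESeq (ETest c) (EGuard (ESeq (wdot (cstar s * r)) (ESeq f (ELoop e b))) b (ETest BOne))) A) (OAct p ` S)"
            using True bT Ed(4)[OF closed_pre[OF S, of "ELoop e b"]] by (simp add: Ed) (rule K)
        qed (use True bT in \<open>simp_all add: Ed\<close>; rule key_L2)+
      qed
    qed
  qed
next
  case (F1 g e b f)
  have GE: "g \<equiv>\<^sub>w ESeq (ELoop e b) f" by (rule wequiv.F1[OF F1(1) F1(2)])
  have ea: "deriv e A OAcc = 0" for A using F1(2) by (simp add: deriv_acc_Eterm)
  show ?case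
  proof
    fix A
    have E: "eqv (deriv g A) (deriv (EGuard (ESeq e g) b f) A)" using F1 by blast
    show "eqv (deriv g A) (deriv (ESeq (ELoop e b) f) A)"
    proof (cases "beval b A")
      case False
      note Ed = eqvD[OF E, simplified False, simplified]
      show ?thesis
      proof (rule eqvI)
        fix p and S :: "('t,'p,'v,'s) exp set" assume S: "closed S"
        show "mass (deriv g A) (OAct p ` S) = mass (deriv (ESeq (ELoop e b) f) A) (OAct p ` S)"
          using False Ed(4)[OF S] by simp
      qed (use False in \<open>simp_all add: Ed\<close>)
    next
      case True
      let ?G = "deriv (EGuard (ESeq e g) b f) A"
      have g1: "deriv g A OAcc = 0"
      proof -
        have "deriv g A OAcc = ?G OAcc" by (rule eqvD(1)[OF E])
        also have "\<dots> = 0" using True by (simp add: ea)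
        finally show ?thesis .
      qed
      have g2: "deriv g A ORej = deriv e A ORej"
      proof -
        have "deriv g A ORej = ?G ORej" by (rule eqvD(2)[OF E])
        also have "\<dots> = deriv e A ORej" using True by (simp add: ea)
        finally show ?thesis .
      qed
      have g3: "deriv g A (OOut v) = deriv e A (OOut v)" for v
      proof -
        have "deriv g A (OOut v) = ?G (OOut v)" by (rule eqvD(3)[OF E])
        also have "\<dots> = deriv e A (OOut v)" using True by (simp add: ea)
        finally show ?thesis .
      qed
      show ?thesis
      proof (rule eqvI)
        fix p and S :: "('t,'p,'v,'s) exp set" assume S: "closed S"
        have "x \<in> pre g S \<longleftrightarrow> x \<in> pre (ELoop e b) (pre f S)" for x
        proof -
          have "ESeq x g \<equiv>\<^sub>w ESeq (ESeq x (ELoop e b)) f"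
            by (rule wequiv.trans[OF wequiv.seq_cong[OF wequiv.refl GE] wequiv.sym[OF wequiv.S2]])
          then show ?thesis unfolding pre_def mem_Collect_eq by (rule closed_mem[OF S])
        qed
        then have P: "pre g S = pre (ELoop e b) (pre f S)" by blast
        have "mass (deriv g A) (OAct p ` S) = mass ?G (OAct p ` S)" by (rule eqvD(4)[OF E S])
        also have "\<dots> = mass (deriv e A) (OAct p ` pre g S)" using True by (simp add: ea)
        also have "\<dots> = mass (deriv (ESeq (ELoop e b) f) A) (OAct p ` S)"
          using True by (simp add: ea cstar_zero P)
        finally show "mass (deriv g A) (OAct p ` S) = mass (deriv (ESeq (ELoop e b) f) A) (OAct p ` S)" .
      qed (use True in \<open>simp_all add: g1 g2 g3 ea cstar_zero\<close>)
    qed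
  qed
qed



lemma sum_zero_each:
  fixes b :: "'a \<Rightarrow> 's::wgkat_semiring"
  assumes "finite J" "sum b J = 0" "j \<in> J"
  shows "b j = 0"
  using assms
proof (induction J rule: finite_induct)
  case empty then show ?case by simp
next
  case (insert x F)
  then have "b x + sum b F = 0" by simp
  then have "b x = 0" "sum b F = 0" using positive by blast+
  then show ?case using insert by auto
qed

lemma split_sum:
  fixes b :: "'a \<Rightarrow> 's::wgkat_semiring"
  assumes "finite J" "x + y = sum b J"
  shows "\<exists>c d. (\<forall>j\<in>J. b j = c j + d j) \<and> sum c J = x \<and> sum d J = y"
  using assms
proof (induction J arbitrary: x y rule: finite_induct)
  case empty
  then have "x = 0" "y = 0" using positive by auto
  then show ?case by (intro exI[of _ "\<lambda>_. 0"]) simp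
next
  case (insert j J)
  then have "x + y = b j + sum b J" by simp
  then obtain s t u v where stuv: "s + t = x" "s + u = b j" "u + v = y" "t + v = sum b J"
    using refinement by metis
  obtain c d where cd: "\<forall>j\<in>J. b j = c j + d j" "sum c J = t" "sum d J = v"
    using insert.IH[OF stuv(4)] by blast
  have sc: "sum (c(j := s)) J = sum c J" "sum (d(j := u)) J = sum d J"
    using insert.hyps by (auto intro!: sum.cong)
  show ?case
    by (intro exI[of _ "c(j := s)"] exI[of _ "d(j := u)"])
       (use insert.hyps cd stuv sc in auto)
qed

lemma transport:
  fixes a :: "'a \<Rightarrow> 's::wgkat_semiring" and b :: "'b \<Rightarrow> 's"
  assumes "finite I" "finite J" "sum a I = sum b J"
  shows "\<exists>w. (\<forall>i\<in>I. sum (w i) J = a i) \<and> (\<forall>j\<in>J. sum (\<lambda>i. w i j) I = b j)"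
  using assms
proof (induction I arbitrary: b rule: finite_induct)
  case empty
  then have "\<forall>j\<in>J. b j = 0" using sum_zero_each[of J b] by simp
  then show ?case by (intro exI[of _ "\<lambda>_ _. 0"]) simp
next
  case (insert i I)
  then have "a i + sum a I = sum b J" by simp
  then obtain c d where cd: "\<forall>j\<in>J. b j = c j + d j" "sum c J = a i" "sum d J = sum a I"
    using split_sum[OF insert.prems(1)] by metis
  obtain w where w: "\<forall>i\<in>I. sum (w i) J = a i" "\<forall>j\<in>J. sum (\<lambda>i. w i j) I = d j"
    using insert.IH[OF insert.prems(1) cd(3)[symmetric]] by blast
  have col: "sum (\<lambda>i'. (w(i := c)) i' j) I = sum (\<lambda>i'. w i' j) I" for j
    using insert.hyps by (auto intro!: sum.cong)
  show ?case
    by (intro exI[of _ "w(i := c)"]) (use insert.hyps cd w col in auto)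
qed



definition Icl :: "(('v, 'p, 'x) outc \<Rightarrow> 's::zero) \<Rightarrow> 'p \<Rightarrow> 'x set \<Rightarrow> 'x set" where
  "Icl \<nu> p C = {x \<in> C. OAct p x \<in> supp \<nu>}"

definition Wspec :: "(('v, 'p, 'x) outc \<Rightarrow> 's::comm_monoid_add) \<Rightarrow> (('v, 'p, 'x) outc \<Rightarrow> 's) \<Rightarrow> 'p \<Rightarrow> 'x set \<Rightarrow> ('x \<Rightarrow> 'x \<Rightarrow> 's) \<Rightarrow> bool" where
  "Wspec \<nu> \<mu> p C w = ((\<forall>x\<in>Icl \<nu> p C. sum (w x) (Icl \<mu> p C) = \<nu> (OAct p x)) \<and>
      (\<forall>y\<in>Icl \<mu> p C. sum (\<lambda>x. w x y) (Icl \<nu> p C) = \<mu> (OAct p y)) \<and>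
      (\<forall>x y. w x y \<noteq> 0 \<longrightarrow> x \<in> Icl \<nu> p C \<and> y \<in> Icl \<mu> p C))"

definition Wt where "Wt \<nu> \<mu> p C = (SOME w. Wspec \<nu> \<mu> p C w)"

lemma fin_Icl: "finite (supp \<nu>) \<Longrightarrow> finite (Icl \<nu> p C)"
proof -
  assume f: "finite (supp \<nu>)"
  have "Icl \<nu> p C \<subseteq> OAct p -` supp \<nu>" by (auto simp: Icl_def)
  moreover have "finite (OAct p -` supp \<nu>)" by (rule finite_vimageI[OF f]) (simp add: inj_def)
  ultimately show ?thesis by (rule finite_subset)
qed

lemma mass_Icl:
  assumes "finite (supp \<nu>)"
  shows "mass \<nu> (OAct p ` C) = sum (\<lambda>x. \<nu> (OAct p x)) (Icl \<nu> p C)"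
proof -
  have "mass \<nu> (OAct p ` C) = sum \<nu> (OAct p ` Icl \<nu> p C)"
    by (rule mass_eq_sum) (use fin_Icl[OF assms, of p C] in \<open>auto simp: Icl_def\<close>)
  also have "\<dots> = sum (\<lambda>x. \<nu> (OAct p x)) (Icl \<nu> p C)"
    by (subst sum.reindex) (auto simp: inj_on_def)
  finally show ?thesis .
qed

lemma Wt_spec:
  fixes \<nu> \<mu> :: "('v, 'p, 'x) outc \<Rightarrow> 's::wgkat_semiring"
  assumes "finite (supp \<nu>)" "finite (supp \<mu>)" "mass \<nu> (OAct p ` C) = mass \<mu> (OAct p ` C)"
  shows "Wspec \<nu> \<mu> p C (Wt \<nu> \<mu> p C)"
proof -
  let ?I = "Icl \<nu> p C" and ?J = "Icl \<mu> p C"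
  have fI: "finite ?I" and fJ: "finite ?J" using assms(1,2) by (simp_all add: fin_Icl)
  have eq: "sum (\<lambda>x. \<nu> (OAct p x)) ?I = sum (\<lambda>y. \<mu> (OAct p y)) ?J"
    using assms mass_Icl by metis
  obtain w where w: "\<forall>i\<in>?I. sum (w i) ?J = \<nu> (OAct p i)" "\<forall>j\<in>?J. sum (\<lambda>i. w i j) ?I = \<mu> (OAct p j)"
    using transport[OF fI fJ eq] by blast
  define w' where "w' = (\<lambda>x y. if x \<in> ?I \<and> y \<in> ?J then w x y else 0)"
  have "Wspec \<nu> \<mu> p C w'"
    unfolding Wspec_def
  proof (intro conjI ballI allI impI)
    fix x assume x: "x \<in> ?I"
    have "sum (w' x) ?J = sum (w x) ?J" by (rule sum.cong) (auto simp: w'_def x)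
    then show "sum (w' x) ?J = \<nu> (OAct p x)" using w x by simp
  next
    fix y assume y: "y \<in> ?J"
    have "sum (\<lambda>x. w' x y) ?I = sum (\<lambda>x. w x y) ?I" by (rule sum.cong) (auto simp: w'_def y)
    then show "sum (\<lambda>x. w' x y) ?I = \<mu> (OAct p y)" using w y by simp
  next
    fix x y assume "w' x y \<noteq> 0"
    then show "x \<in> ?I" "y \<in> ?J" by (auto simp: w'_def split: if_splits)
  qed
  then show ?thesis unfolding Wt_def by (rule someI[where P="Wspec \<nu> \<mu> p C"])
qed

definition cls :: "('t::finite, 'p, 'v, 's::wgkat_semiring) exp \<Rightarrow> ('t, 'p, 'v, 's) exp set" where
  "cls x = {z. z \<equiv>\<^sub>w x}"

lemma closed_cls: "closed (cls x)"
  unfolding closed_def cls_def using wequiv.sym wequiv.trans by blast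

lemma cls_eq: "x \<equiv>\<^sub>w y \<Longrightarrow> cls x = cls y"
  unfolding cls_def by (meson wequiv.sym wequiv.trans)

definition rho :: "('t::finite, 'p, 'v, 's::wgkat_semiring) exp \<times> ('t, 'p, 'v, 's) exp \<Rightarrow> 't set
    \<Rightarrow> ('v, 'p, ('t, 'p, 'v, 's) exp \<times> ('t, 'p, 'v, 's) exp) outc \<Rightarrow> 's" where
  "rho ef A ob = (case ob of
      OAcc \<Rightarrow> deriv (fst ef) A OAcc
    | ORej \<Rightarrow> deriv (fst ef) A ORej
    | OOut v \<Rightarrow> deriv (fst ef) A (OOut v)
    | OAct p xy \<Rightarrow> (if fst xy \<equiv>\<^sub>w snd xy
         then Wt (deriv (fst ef) A) (deriv (snd ef) A) p (cls (fst xy)) (fst xy) (snd xy) else 0))"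

lemma spec_R:
  fixes e f :: "('t::finite, 'p, 'v, 's::wgkat_semiring) exp"
  assumes "e \<equiv>\<^sub>w f"
  shows "Wspec (deriv e A) (deriv f A) p (cls x) (Wt (deriv e A) (deriv f A) p (cls x))"
  using Wt_spec[OF fin_deriv fin_deriv eqvD(4)[OF sound1[OF assms, rule_format] closed_cls]] .



lemma rho_act_nz:
  fixes e f :: "('t::finite, 'p, 'v, 's::wgkat_semiring) exp"
  assumes "e \<equiv>\<^sub>w f" "rho (e, f) A (OAct p (x, y)) \<noteq> 0"
  shows "x \<equiv>\<^sub>w y" "OAct p x \<in> supp (deriv e A)" "OAct p y \<in> supp (deriv f A)"
proof -
  show xy: "x \<equiv>\<^sub>w y" using assms(2) by (auto simp: rho_def split: if_splits)
  then have "Wt (deriv e A) (deriv f A) p (cls x) x y \<noteq> 0" using assms(2) by (simp add: rho_def)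
  then have "x \<in> Icl (deriv e A) p (cls x) \<and> y \<in> Icl (deriv f A) p (cls x)"
    using spec_R[OF assms(1), of A p x] unfolding Wspec_def by blast
  then show "OAct p x \<in> supp (deriv e A)" "OAct p y \<in> supp (deriv f A)" by (auto simp: Icl_def)
qed

lemma aut_R: "is_aut {(e :: ('t::finite, 'p, 'v, 's::wgkat_semiring) exp, f). e \<equiv>\<^sub>w f} rho"
  unfolding is_aut_def
proof (intro ballI allI conjI impI)
  fix ef :: "('t, 'p, 'v, 's) exp \<times> ('t, 'p, 'v, 's) exp" and A
  assume "ef \<in> {(e, f). e \<equiv>\<^sub>w f}"
  then obtain e f where ef: "ef = (e, f)" "e \<equiv>\<^sub>w f" by auto
  let ?n = "deriv e A" and ?m = "deriv f A"
  let ?P = "(case_prod OAct -` supp ?n) \<times> (snd ` (case_prod OAct -` supp ?m))"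
  let ?B = "{OAcc, ORej} \<union> OOut ` (OOut -` supp ?n) \<union> (\<lambda>((p, x), y). OAct p (x, y)) ` ?P"
  have injA: "inj (case_prod OAct)" by (auto simp: inj_def)
  have injO: "inj OOut" by (auto simp: inj_def)
  have "finite ?P" using finite_vimageI[OF fin_deriv injA] by blast
  then have fB: "finite ?B" using finite_vimageI[OF fin_deriv injO] by blast
  have "supp (rho ef A) \<subseteq> ?B"
  proof
    fix ob assume ob: "ob \<in> supp (rho ef A)"
    show "ob \<in> ?B"
    proof (cases ob)
      case (OOut v)
      then show ?thesis using ob by (auto simp: supp_def rho_def ef)
    next
      case (OAct p xy)
      obtain x y where xy: "xy = (x, y)" by fastforce
      have nz: "rho (e, f) A (OAct p (x, y)) \<noteq> 0" using ob OAct xy ef by (simp add: supp_def)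
      note r = rho_act_nz[OF ef(2) nz]
      have "(p, y) \<in> case_prod OAct -` supp ?m" using r(3) by simp
      then have "y \<in> snd ` (case_prod OAct -` supp ?m)" by (metis snd_conv image_eqI)
      then have "((p, x), y) \<in> ?P" using r(2) by simp
      then have "ob \<in> (\<lambda>((p, x), y). OAct p (x, y)) ` ?P"
        using OAct xy by (intro image_eqI[where x="((p,x),y)"]) simp_all
      then show ?thesis by (rule UnI2)
    qed simp_all
  qed
  then show "finite (supp (rho ef A))" using fB by (rule finite_subset)
next
  fix ef :: "('t, 'p, 'v, 's) exp \<times> ('t, 'p, 'v, 's) exp" and A p y
  assume "ef \<in> {(e, f). e \<equiv>\<^sub>w f}" "rho ef A (OAct p y) \<noteq> 0"
  then show "y \<in> {(e, f). e \<equiv>\<^sub>w f}"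
    by (cases y) (simp add: rho_def split: if_splits)
qed

lemma hom_fst: "is_hom {(e :: ('t::finite, 'p, 'v, 's::wgkat_semiring) exp, f). e \<equiv>\<^sub>w f} rho UNIV deriv fst"
  unfolding is_hom_def
proof (intro ballI allI conjI impI)
  fix ef :: "('t, 'p, 'v, 's) exp \<times> ('t, 'p, 'v, 's) exp" and A
  assume "ef \<in> {(e, f). e \<equiv>\<^sub>w f}"
  then obtain e f where ef: "ef = (e, f)" "e \<equiv>\<^sub>w f" by auto
  show "fst ef \<in> UNIV" by simp
  {
    fix ob :: "('v, 'p, ('t, 'p, 'v, 's) exp \<times> ('t, 'p, 'v, 's) exp) outc"
    assume "\<not> is_act ob"
    then show "deriv (fst ef) A (map_outc id id fst ob) = rho ef A ob"
      by (cases ob) (simp_all add: rho_def)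
  }
  fix p and y :: "('t, 'p, 'v, 's) exp"
  let ?n = "deriv e A" and ?m = "deriv f A"
  let ?C = "cls y"
  let ?w = "Wt ?n ?m p ?C"
  let ?I = "Icl ?n p ?C" and ?J = "Icl ?m p ?C"
  have sp: "Wspec ?n ?m p ?C ?w" by (rule spec_R[OF ef(2)])
  have fJ: "finite ?J" by (rule fin_Icl[OF fin_deriv])
  have Jc: "y' \<in> ?J \<Longrightarrow> y \<equiv>\<^sub>w y'" for y' by (auto simp: Icl_def cls_def intro: wequiv.sym)
  have "mass (rho ef A) {OAct p x' |x'. x' \<in> {(e, f). e \<equiv>\<^sub>w f} \<and> fst x' = y}
      = sum (rho ef A) ((\<lambda>y'. OAct p (y, y')) ` ?J)"
  proof (rule mass_eq_sum)
    show "finite ((\<lambda>y'. OAct p (y, y')) ` ?J)" using fJ by simp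
    show "(\<lambda>y'. OAct p (y, y')) ` ?J \<subseteq> {OAct p x' |x'. x' \<in> {(e, f). e \<equiv>\<^sub>w f} \<and> fst x' = y}"
      using Jc by auto
    show "{OAct p x' |x'. x' \<in> {(e, f). e \<equiv>\<^sub>w f} \<and> fst x' = y} \<inter> supp (rho ef A) \<subseteq> (\<lambda>y'. OAct p (y, y')) ` ?J"
    proof
      fix z assume z: "z \<in> {OAct p x' |x'. x' \<in> {(e, f). e \<equiv>\<^sub>w f} \<and> fst x' = y} \<inter> supp (rho ef A)"
      then obtain y' where zy: "z = OAct p (y, y')" "y \<equiv>\<^sub>w y'" by auto
      then have "?w y y' \<noteq> 0" using z ef by (simp add: supp_def rho_def)
      then have "y' \<in> ?J" using sp unfolding Wspec_def by blast
      then show "z \<in> (\<lambda>y'. OAct p (y, y')) ` ?J" using zy by blast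
    qed
  qed
  also have "\<dots> = sum (\<lambda>y'. ?w y y') ?J"
  proof -
    have "sum (rho ef A) ((\<lambda>y'. OAct p (y, y')) ` ?J) = sum (rho ef A \<circ> (\<lambda>y'. OAct p (y, y'))) ?J"
      by (rule sum.reindex) (simp add: inj_on_def)
    also have "\<dots> = sum (\<lambda>y'. ?w y y') ?J"
      by (rule sum.cong) (simp_all add: rho_def ef Jc)
    finally show ?thesis .
  qed
  also have "\<dots> = ?n (OAct p y)"
  proof (cases "y \<in> ?I")
    case True
    then show ?thesis using sp unfolding Wspec_def by blast
  next
    case False
    have "?w y y' = 0" for y' using sp False unfolding Wspec_def by blast
    moreover have "?n (OAct p y) = 0" using False
      by (simp add: Icl_def cls_def supp_def wequiv.refl)
    ultimately show ?thesis by simp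
  qed
  finally show "deriv (fst ef) A (OAct p y) = mass (rho ef A) {OAct p x' |x'. x' \<in> {(e, f). e \<equiv>\<^sub>w f} \<and> fst x' = y}"
    using ef by simp
qed

lemma hom_snd: "is_hom {(e :: ('t::finite, 'p, 'v, 's::wgkat_semiring) exp, f). e \<equiv>\<^sub>w f} rho UNIV deriv snd"
  unfolding is_hom_def
proof (intro ballI allI conjI impI)
  fix ef :: "('t, 'p, 'v, 's) exp \<times> ('t, 'p, 'v, 's) exp" and A
  assume "ef \<in> {(e, f). e \<equiv>\<^sub>w f}"
  then obtain e f where ef: "ef = (e, f)" "e \<equiv>\<^sub>w f" by auto
  show "snd ef \<in> UNIV" by simp
  have E: "eqv (deriv e A) (deriv f A)" using sound1[OF ef(2)] by blast
  {
    fix ob :: "('v, 'p, ('t, 'p, 'v, 's) exp \<times> ('t, 'p, 'v, 's) exp) outc"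
    assume "\<not> is_act ob"
    then show "deriv (snd ef) A (map_outc id id snd ob) = rho ef A ob"
      by (cases ob) (simp_all add: rho_def ef eqvD[OF E])
  }
  fix p and y :: "('t, 'p, 'v, 's) exp"
  let ?n = "deriv e A" and ?m = "deriv f A"
  let ?C = "cls y"
  let ?w = "Wt ?n ?m p ?C"
  let ?I = "Icl ?n p ?C" and ?J = "Icl ?m p ?C"
  have sp: "Wspec ?n ?m p ?C ?w" by (rule spec_R[OF ef(2)])
  have fI: "finite ?I" by (rule fin_Icl[OF fin_deriv])
  have Ic: "x' \<in> ?I \<Longrightarrow> x' \<equiv>\<^sub>w y" for x' by (auto simp: Icl_def cls_def)
  have rw: "x' \<equiv>\<^sub>w y \<Longrightarrow> rho ef A (OAct p (x', y)) = ?w x' y" for x'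
    using cls_eq[of x' y] by (simp add: rho_def ef)
  have "mass (rho ef A) {OAct p x' |x'. x' \<in> {(e, f). e \<equiv>\<^sub>w f} \<and> snd x' = y}
      = sum (rho ef A) ((\<lambda>x'. OAct p (x', y)) ` ?I)"
  proof (rule mass_eq_sum)
    show "finite ((\<lambda>x'. OAct p (x', y)) ` ?I)" using fI by simp
    show "(\<lambda>x'. OAct p (x', y)) ` ?I \<subseteq> {OAct p x' |x'. x' \<in> {(e, f). e \<equiv>\<^sub>w f} \<and> snd x' = y}"
      using Ic by auto
    show "{OAct p x' |x'. x' \<in> {(e, f). e \<equiv>\<^sub>w f} \<and> snd x' = y} \<inter> supp (rho ef A) \<subseteq> (\<lambda>x'. OAct p (x', y)) ` ?I"
    proof
      fix z assume z: "z \<in> {OAct p x' |x'. x' \<in> {(e, f). e \<equiv>\<^sub>w f} \<and> snd x' = y} \<inter> supp (rho ef A)"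
      then obtain x' where zx: "z = OAct p (x', y)" "x' \<equiv>\<^sub>w y" by auto
      then have "?w x' y \<noteq> 0" using z rw[OF zx(2)] by (simp add: supp_def)
      then have "x' \<in> ?I" using sp unfolding Wspec_def by blast
      then show "z \<in> (\<lambda>x'. OAct p (x', y)) ` ?I" using zx by blast
    qed
  qed
  also have "\<dots> = sum (\<lambda>x'. ?w x' y) ?I"
  proof -
    have "sum (rho ef A) ((\<lambda>x'. OAct p (x', y)) ` ?I) = sum (rho ef A \<circ> (\<lambda>x'. OAct p (x', y))) ?I"
      by (rule sum.reindex) (simp add: inj_on_def)
    also have "\<dots> = sum (\<lambda>x'. ?w x' y) ?I"
      by (rule sum.cong) (simp_all add: rw Ic)
    finally show ?thesis .
  qed
  also have "\<dots> = ?m (OAct p y)"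
  proof (cases "y \<in> ?J")
    case True
    then show ?thesis using sp unfolding Wspec_def by blast
  next
    case False
    have "?w x' y = 0" for x' using sp False unfolding Wspec_def by blast
    moreover have "?m (OAct p y) = 0" using False
      by (simp add: Icl_def cls_def supp_def wequiv.refl)
    ultimately show ?thesis by simp
  qed
  finally show "deriv (snd ef) A (OAct p y) = mass (rho ef A) {OAct p x' |x'. x' \<in> {(e, f). e \<equiv>\<^sub>w f} \<and> snd x' = y}"
    using ef by simp
qed

theorem mainTheorem5:
  fixes e f :: "('t::finite, 'p, 'v, 's::wgkat_semiring) exp"
  assumes "e \<equiv>\<^sub>w f"
  shows "e \<sim>\<^sub>w f"
  unfolding bisimilar_def bisim_def
  using aut_R hom_fst hom_snd assms by blast

end
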